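(* There exist two sequences of real numbers $a_k$, $b_k$ whose associated series converge absolutely, and such that, defining $\bar{\Gamma}_1 := \sum_{k =0}^\infty a_k \big(\frac{\gamma^2}{1+\gamma^2}\big)^k$ and $\bar{\Gamma}_2 := \sum_{k =0}^\infty b_k \big(\frac{\gamma^2}{1+\gamma^2}\big)^k$, the functions $\bar{\Gamma}_1$ and $\bar{\Gamma}_2$ solve $4 \gamma \partial_\gamma \bar \Gamma_1 + 6 \bar \Gamma_1 - 13 \bar \Gamma_2 = 0$, $4 \gamma \partial_\gamma \bar \Gamma_2 + 9 \bar\Gamma_2 - \frac{10} {1+\gamma^2}\big(\bar \Gamma_1 + \gamma^2 \frac{2}{\pi}\int_0^\infty \bar \Gamma_1\frac{d\gamma}{1+\gamma^2}\big) = 0$, with $\frac{2}{\pi}\int_0^\infty \bar{\Gamma}_1\frac{d\gamma}{1+\gamma^2} = A$, where $A=-\frac{351}{19}$.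
   Context: $\gamma=\tan\theta\in[0,\infty)$, so $\frac{2}{\pi}\int_0^\infty f\frac{d\gamma}{1+\gamma^2}$ is the angular average over $\theta\in[0,\pi/2]$. This is the profile equation for $\bar\Gamma=\Gamma^*-\Gamma^*(\gamma=0)$ of the (renormalized) angular profile $\Gamma^*$, whose first component has angular average $26$; $A$ is the angular average of $\bar\Gamma_1$. *)

theory Defs
  imports "HOL-Analysis.Analysis"
begin

end

theory Submission
  imports Defs "HOL-Probability.Sinc_Integral" "HOL-Real_Asymp.Real_Asymp"
begin

definition M0 :: real where "M0 = - 351 / 19"

fun ab :: "nat \<Rightarrow> real \<times> real" where
  "ab 0 = (0, 0)"
| "ab (Suc n) = (let k = real (Suc n);
     r1 = 8 * real n * fst (ab n);
     r2 = 8 * real n * snd (ab n) - 10 * fst (ab n) + (if n = 0 then 10 * M0 else 0);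
     d = 4 * (8 * k + 19) * (2 * k - 1)
   in ((r1 * (8 * k + 9) + 13 * r2) / d, (10 * r1 + (8 * k + 6) * r2) / d))"

definition aa :: "nat \<Rightarrow> real" where "aa n = fst (ab n)"
definition bb :: "nat \<Rightarrow> real" where "bb n = snd (ab n)"

lemma aa0[simp]: "aa 0 = 0" and bb0[simp]: "bb 0 = 0" by (simp_all add: aa_def bb_def)

lemma d_pos: "4 * (8 * real (Suc n) + 19) * (2 * real (Suc n) - 1) > 0"
  by (intro mult_pos_pos) auto

lemma aa_Suc: "aa (Suc n) = (8 * real n * aa n * (8 * real (Suc n) + 9) + 13 * (8 * real n * bb n - 10 * aa n + (if n = 0 then 10 * M0 else 0))) / (4 * (8 * real (Suc n) + 19) * (2 * real (Suc n) - 1))"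
  by (simp add: aa_def bb_def Let_def)
lemma bb_Suc: "bb (Suc n) = (10 * (8 * real n * aa n) + (8 * real (Suc n) + 6) * (8 * real n * bb n - 10 * aa n + (if n = 0 then 10 * M0 else 0))) / (4 * (8 * real (Suc n) + 19) * (2 * real (Suc n) - 1))"
  by (simp add: aa_def bb_def Let_def)

lemma R1: "(8 * real (Suc n) + 6) * aa (Suc n) - 8 * real n * aa n - 13 * bb (Suc n) = 0"
proof -
  define d where "d = 4 * (8 * real (Suc n) + 19) * (2 * real (Suc n) - 1)"
  have d: "d > 0" unfolding d_def by (rule d_pos)
  show ?thesis unfolding aa_Suc bb_Suc d_def[symmetric] using d
    by (simp add: field_simps d_def)
qed

lemma R2: "(8 * real (Suc n) + 9) * bb (Suc n) - 8 * real n * bb n - 10 * aa (Suc n) + 10 * aa n - (if n = 0 then 10 * M0 else 0) = 0"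
proof -
  define d where "d = 4 * (8 * real (Suc n) + 19) * (2 * real (Suc n) - 1)"
  have d: "d > 0" unfolding d_def by (rule d_pos)
  define c where "c = (if n = 0 then 10 * M0 else 0)"
  have A: "aa (Suc n) * d = 8 * real n * aa n * (8 * real (Suc n) + 9) + 13 * (8 * real n * bb n - 10 * aa n + c)"
    unfolding aa_Suc d_def[symmetric] c_def using d by simp
  have B: "bb (Suc n) * d = 10 * (8 * real n * aa n) + (8 * real (Suc n) + 6) * (8 * real n * bb n - 10 * aa n + c)"
    unfolding bb_Suc d_def[symmetric] c_def using d by simp
  have "d * ((8 * real (Suc n) + 9) * bb (Suc n) - 8 * real n * bb n - 10 * aa (Suc n) + 10 * aa n - c) = 
     (8 * real (Suc n) + 9) * (bb (Suc n) * d) - 8 * real n * bb n * d - 10 * (aa (Suc n) * d) + 10 * aa n * d - c * d"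
    by (simp add: algebra_simps)
  also have "\<dots> = 0" by (simp only: A B) (simp add: d_def algebra_simps)
  finally show ?thesis using d unfolding c_def by simp
qed

lemma step_ab:
  assumes "n \<ge> 1"
  shows "aa (Suc n) = ((64 * real n ^ 2 + 136 * real n - 130) * aa n + 104 * real n * bb n) / (64 * real n ^ 2 + 248 * real n + 108)"
    and "bb (Suc n) = (- 140 * aa n + (64 * real n ^ 2 + 112 * real n) * bb n) / (64 * real n ^ 2 + 248 * real n + 108)"
  using assms unfolding aa_Suc bb_Suc by (simp_all add: algebra_simps power2_eq_square)

definition VV :: "nat \<Rightarrow> real" where "VV n = \<bar>aa n\<bar> + 3 * \<bar>bb n\<bar>"

lemma VV_step:
  assumes n: "n \<ge> 32"
  shows "VV (Suc n) \<le> (2 * real n - 1) / (2 * real n + 2) * VV n"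
proof -
  define x where "x = real n"
  have x: "x \<ge> 32" using n unfolding x_def by simp
  define d where "d = 64 * x ^ 2 + 248 * x + 108"
  have d: "d > 0" unfolding d_def using x by (simp add: add_pos_nonneg)
  define p where "p = 64 * x ^ 2 + 136 * x - 130"
  define q where "q = 64 * x ^ 2 + 112 * x"
  have p: "p \<ge> 0"
  proof -
    have "x ^ 2 \<ge> 0" by simp
    then show ?thesis unfolding p_def using x by linarith
  qed
  have q: "q \<ge> 0" unfolding q_def using x by simp
  have A: "aa (Suc n) = (p * aa n + 104 * x * bb n) / d" using step_ab(1)[of n] n by (simp add: p_def d_def x_def)
  have B: "bb (Suc n) = (- 140 * aa n + q * bb n) / d" using step_ab(2)[of n] n by (simp add: q_def d_def x_def)
  have A': "\<bar>aa (Suc n)\<bar> \<le> (p * \<bar>aa n\<bar> + 104 * x * \<bar>bb n\<bar>) / d"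
  proof -
    have "\<bar>p * aa n + 104 * x * bb n\<bar> \<le> p * \<bar>aa n\<bar> + 104 * x * \<bar>bb n\<bar>"
      using abs_triangle_ineq[of "p * aa n" "104 * x * bb n"] p x by (simp add: abs_mult)
    then show ?thesis unfolding A using d by (simp add: abs_div divide_right_mono)
  qed
  have B': "\<bar>bb (Suc n)\<bar> \<le> (140 * \<bar>aa n\<bar> + q * \<bar>bb n\<bar>) / d"
  proof -
    have "\<bar>- 140 * aa n + q * bb n\<bar> \<le> 140 * \<bar>aa n\<bar> + q * \<bar>bb n\<bar>"
      using abs_triangle_ineq[of "- 140 * aa n" "q * bb n"] q by (simp add: abs_mult)
    then show ?thesis unfolding B using d by (simp add: abs_div divide_right_mono)
  qed
  have i1: "(p + 420) * (2 * x + 2) \<le> (2 * x - 1) * d"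
  proof -
    have "(2 * x - 1) * d - (p + 420) * (2 * x + 2) = x * (32 * x - 884) - 688"
      unfolding d_def p_def by (simp add: algebra_simps power2_eq_square power3_eq_cube)
    moreover have "x * (32 * x - 884) \<ge> 32 * 140" using x by (intro mult_mono) auto
    ultimately show ?thesis by linarith
  qed
  have i2: "(104 * x + 3 * q) * (2 * x + 2) \<le> 3 * ((2 * x - 1) * d)"
  proof -
    have "3 * ((2 * x - 1) * d) - (104 * x + 3 * q) * (2 * x + 2) = x * (32 * x - 976) - 324"
      unfolding d_def q_def by (simp add: algebra_simps power2_eq_square power3_eq_cube)
    moreover have "x * (32 * x - 976) \<ge> 32 * 48" using x by (intro mult_mono) auto
    ultimately show ?thesis by linarith
  qed
  define r where "r = (2 * x - 1) / (2 * x + 2)"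
  have r1: "p + 420 \<le> r * d" unfolding r_def using i1 x by (simp add: pos_le_divide_eq)
  have r2: "104 * x + 3 * q \<le> 3 * (r * d)" unfolding r_def using i2 x by (simp add: pos_le_divide_eq)
  have e: "(p * \<bar>aa n\<bar> + 104 * x * \<bar>bb n\<bar>) / d + 3 * ((140 * \<bar>aa n\<bar> + q * \<bar>bb n\<bar>) / d)
      = ((p + 420) * \<bar>aa n\<bar> + (104 * x + 3 * q) * \<bar>bb n\<bar>) / d"
    using d by (simp add: divide_simps) (simp add: algebra_simps)
  have "VV (Suc n) \<le> ((p + 420) * \<bar>aa n\<bar> + (104 * x + 3 * q) * \<bar>bb n\<bar>) / d"
    using A' B' e unfolding VV_def by linarith
  also have "\<dots> \<le> (r * d * \<bar>aa n\<bar> + 3 * (r * d) * \<bar>bb n\<bar>) / d"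
    using r1 r2 d by (intro divide_right_mono add_mono mult_right_mono) auto
  also have "\<dots> = r * VV n"
    unfolding VV_def using d by (simp add: divide_simps) (simp add: algebra_simps)
  finally show ?thesis unfolding x_def r_def .
qed

fun cc :: "nat \<Rightarrow> real" where
  "cc 0 = 1"
| "cc (Suc n) = cc n * (2 * real n + 1) / (2 * real n + 2)"

lemma cc_pos: "cc n > 0"
  by (induction n) auto

definition tt :: "nat \<Rightarrow> real" where "tt n = cc n / (real n + 1)"

lemma tt_eq: "tt n = 2 * (cc n - cc (Suc n))"
  unfolding tt_def by (simp add: field_simps)

lemma tt_pos: "tt n > 0" unfolding tt_def using cc_pos by simp

lemma summable_tt: "summable tt"
proof -
  have "summable (\<lambda>n. cc n - cc (Suc n))"
  proof (rule summableI_nonneg_bounded)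
    show "0 \<le> cc n - cc (Suc n)" for n using cc_pos[of n] by (simp add: field_simps)
    show "(\<Sum>i<n. cc i - cc (Suc i)) \<le> 1" for n
      using sum_lessThan_telescope'[of cc n] cc_pos[of n] by simp
  qed
  then show ?thesis unfolding tt_eq by (rule summable_mult)
qed

lemma tt_step: "(2 * real n - 1) / (2 * real n + 2) * tt n \<le> tt (Suc n)"
proof -
  have "tt (Suc n) = (2 * real n + 1) / (2 * real n + 4) * tt n"
    unfolding tt_def by (simp add: field_simps)
  moreover have "(2 * real n - 1) / (2 * real n + 2) \<le> (2 * real n + 1) / (2 * real n + 4)"
    by (simp add: field_simps)
  ultimately show ?thesis using tt_pos[of n] mult_right_mono[of "(2 * real n - 1) / (2 * real n + 2)" "(2 * real n + 1) / (2 * real n + 4)" "tt n"]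
    by simp
qed

lemma VV_nonneg: "VV n \<ge> 0" unfolding VV_def by simp

lemma VV_bound: "n \<ge> 32 \<Longrightarrow> VV n \<le> (VV 32 / tt 32) * tt n"
proof (induction n rule: nat_induct_at_least)
  case base
  then show ?case using tt_pos[of 32] by simp
next
  case (Suc n)
  define K where "K = VV 32 / tt 32"
  have K: "K \<ge> 0" unfolding K_def using VV_nonneg[of 32] tt_pos[of 32] by simp
  have r: "(2 * real n - 1) / (2 * real n + 2) \<ge> 0" using Suc.hyps by simp
  have "VV (Suc n) \<le> (2 * real n - 1) / (2 * real n + 2) * VV n" by (rule VV_step[OF Suc.hyps])
  also have "\<dots> \<le> (2 * real n - 1) / (2 * real n + 2) * (K * tt n)"
    using Suc.IH r unfolding K_def by (intro mult_left_mono) auto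
  also have "\<dots> = K * ((2 * real n - 1) / (2 * real n + 2) * tt n)" by simp
  also have "\<dots> \<le> K * tt (Suc n)" using K tt_step by (intro mult_left_mono) auto
  finally show ?case unfolding K_def .
qed

lemma summable_aa: "summable (\<lambda>k. \<bar>aa k\<bar>)"
proof (rule summable_comparison_test')
  show "summable (\<lambda>n. (VV 32 / tt 32) * tt n)" using summable_tt by (rule summable_mult)
  show "norm \<bar>aa n\<bar> \<le> (VV 32 / tt 32) * tt n" if "n \<ge> 32" for n
    using VV_bound[OF that] unfolding VV_def by simp
qed

lemma summable_bb: "summable (\<lambda>k. \<bar>bb k\<bar>)"
proof (rule summable_comparison_test')
  show "summable (\<lambda>n. (VV 32 / tt 32) * tt n)" using summable_tt by (rule summable_mult)
  show "norm \<bar>bb n\<bar> \<le> (VV 32 / tt 32) * tt n" if "n \<ge> 32" for n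
    using VV_bound[OF that] unfolding VV_def by simp
qed


definition sh :: "(nat \<Rightarrow> real) \<Rightarrow> nat \<Rightarrow> real" where
  "sh f k = (case k of 0 \<Rightarrow> 0 | Suc j \<Rightarrow> f j)"

lemma sh_0[simp]: "sh f 0 = 0" and sh_Suc[simp]: "sh f (Suc j) = f j"
  by (simp_all add: sh_def)

lemma sums_sh:
  assumes "(\<lambda>k. f k * x ^ k) sums S"
  shows "(\<lambda>k. sh f k * x ^ k) sums (x * S)"
proof -
  have "(\<lambda>k. f k * x ^ k * x) sums (S * x)" using assms by (rule sums_mult2)
  then have "(\<lambda>k. sh f (Suc k) * x ^ (Suc k)) sums (x * S)" by (simp add: mult_ac)
  then show ?thesis by (subst (asm) sums_Suc_iff) simp
qed

lemma ps_summable: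
  fixes c :: "nat \<Rightarrow> real"
  assumes "summable (\<lambda>k. \<bar>c k\<bar>)" "\<bar>y\<bar> \<le> 1"
  shows "summable (\<lambda>k. c k * y ^ k)"
proof (rule summable_comparison_test[OF _ assms(1)])
  show "\<exists>N. \<forall>n\<ge>N. norm (c n * y ^ n) \<le> \<bar>c n\<bar>"
    using assms(2) by (auto simp: abs_mult power_abs intro!: mult_left_le power_le_one)
qed

lemma ps_deriv:
  fixes c :: "nat \<Rightarrow> real"
  assumes "summable (\<lambda>k. \<bar>c k\<bar>)" "\<bar>y\<bar> < 1"
  shows "DERIV (\<lambda>y. \<Sum>k. c k * y ^ k) y :> (\<Sum>k. diffs c k * y ^ k)"
  using termdiffs_strong[of c 1 y] ps_summable[OF assms(1), of 1] assms(2) by simp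

lemma ps_diffs_sums:
  fixes c :: "nat \<Rightarrow> real"
  assumes "summable (\<lambda>k. \<bar>c k\<bar>)" "\<bar>y\<bar> < 1"
  shows "(\<lambda>k. (real k * c k) * y ^ k) sums (y * (\<Sum>k. diffs c k * y ^ k))"
proof -
  have "summable (\<lambda>k. diffs c k * y ^ k)"
    by (rule termdiff_converges[of y 1]) (use assms ps_summable[OF assms(1)] in auto)
  then have "(\<lambda>k. diffs c k * y ^ k * y) sums ((\<Sum>k. diffs c k * y ^ k) * y)"
    by (intro sums_mult2 summable_sums)
  then have "(\<lambda>k. (real (Suc k) * c (Suc k)) * y ^ (Suc k)) sums (y * (\<Sum>k. diffs c k * y ^ k))"
    by (simp add: diffs_def mult_ac)
  then show ?thesis by (subst (asm) sums_Suc_iff) simp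
qed

lemma E1_series:
  assumes "\<bar>x\<bar> < 1"
  shows "8 * (1 - x) * (x * (\<Sum>k. diffs aa k * x ^ k)) + 6 * (\<Sum>k. aa k * x ^ k) - 13 * (\<Sum>k. bb k * x ^ k) = 0"
proof -
  define Da where "Da = x * (\<Sum>k. diffs aa k * x ^ k)"
  have sD: "(\<lambda>k. (real k * aa k) * x ^ k) sums Da" unfolding Da_def by (rule ps_diffs_sums[OF summable_aa assms])
  have sxD: "(\<lambda>k. sh (\<lambda>j. real j * aa j) k * x ^ k) sums (x * Da)" by (rule sums_sh[OF sD])
  have sA: "(\<lambda>k. aa k * x ^ k) sums (\<Sum>k. aa k * x ^ k)"
    using ps_summable[OF summable_aa, of x] assms by (simp add: summable_sums)
  have sB: "(\<lambda>k. bb k * x ^ k) sums (\<Sum>k. bb k * x ^ k)"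
    using ps_summable[OF summable_bb, of x] assms by (simp add: summable_sums)
  have "(\<lambda>k. 8 * ((real k * aa k) * x ^ k) - 8 * (sh (\<lambda>j. real j * aa j) k * x ^ k) + 6 * (aa k * x ^ k) - 13 * (bb k * x ^ k))
     sums (8 * Da - 8 * (x * Da) + 6 * (\<Sum>k. aa k * x ^ k) - 13 * (\<Sum>k. bb k * x ^ k))"
    using sums_diff[OF sums_add[OF sums_diff[OF sums_mult[OF sD, of 8] sums_mult[OF sxD, of 8]] sums_mult[OF sA, of 6]] sums_mult[OF sB, of 13]] .
  moreover have Z: "(\<lambda>k. 8 * ((real k * aa k) * x ^ k) - 8 * (sh (\<lambda>j. real j * aa j) k * x ^ k) + 6 * (aa k * x ^ k) - 13 * (bb k * x ^ k)) = (\<lambda>k. 0)"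
  proof
    fix k show "8 * ((real k * aa k) * x ^ k) - 8 * (sh (\<lambda>j. real j * aa j) k * x ^ k) + 6 * (aa k * x ^ k) - 13 * (bb k * x ^ k) = 0"
    proof (cases k)
      case 0 then show ?thesis by simp
    next
      case (Suc n)
      have "8 * ((real k * aa k) * x ^ k) - 8 * (sh (\<lambda>j. real j * aa j) k * x ^ k) + 6 * (aa k * x ^ k) - 13 * (bb k * x ^ k)
          = ((8 * real (Suc n) + 6) * aa (Suc n) - 8 * real n * aa n - 13 * bb (Suc n)) * x ^ k"
        unfolding Suc by (simp only: sh_Suc of_nat_Suc) (simp add: algebra_simps)
      then show ?thesis using R1[of n] by simp
    qed
  qed
  ultimately have S0: "(\<lambda>k. 0) sums (8 * Da - 8 * (x * Da) + 6 * (\<Sum>k. aa k * x ^ k) - 13 * (\<Sum>k. bb k * x ^ k))" by (simp only:)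
  then have "8 * Da - 8 * (x * Da) + 6 * (\<Sum>k. aa k * x ^ k) - 13 * (\<Sum>k. bb k * x ^ k) = 0"
    using sums_unique2[OF _ sums_zero] by blast
  then show ?thesis unfolding Da_def[symmetric] by (simp add: algebra_simps)
qed

lemma E2_series:
  assumes "\<bar>x\<bar> < 1"
  shows "8 * (1 - x) * (x * (\<Sum>k. diffs bb k * x ^ k)) + 9 * (\<Sum>k. bb k * x ^ k) - 10 * (1 - x) * (\<Sum>k. aa k * x ^ k) - 10 * M0 * x = 0"
proof -
  define Db where "Db = x * (\<Sum>k. diffs bb k * x ^ k)"
  define SA where "SA = (\<Sum>k. aa k * x ^ k)"
  have sD: "(\<lambda>k. (real k * bb k) * x ^ k) sums Db" unfolding Db_def by (rule ps_diffs_sums[OF summable_bb assms])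
  have sxD: "(\<lambda>k. sh (\<lambda>j. real j * bb j) k * x ^ k) sums (x * Db)" by (rule sums_sh[OF sD])
  have sA: "(\<lambda>k. aa k * x ^ k) sums SA"
    using ps_summable[OF summable_aa, of x] assms unfolding SA_def by (simp add: summable_sums)
  have sxA: "(\<lambda>k. sh aa k * x ^ k) sums (x * SA)" by (rule sums_sh[OF sA])
  have sB: "(\<lambda>k. bb k * x ^ k) sums (\<Sum>k. bb k * x ^ k)"
    using ps_summable[OF summable_bb, of x] assms by (simp add: summable_sums)
  have sM: "(\<lambda>k. if k = 1 then 10 * M0 * x ^ k else 0) sums (10 * M0 * x ^ 1)"
    by (rule sums_single)
  have "(\<lambda>k. 8 * ((real k * bb k) * x ^ k) - 8 * (sh (\<lambda>j. real j * bb j) k * x ^ k) + 9 * (bb k * x ^ k)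
        - 10 * (aa k * x ^ k) + 10 * (sh aa k * x ^ k) - (if k = 1 then 10 * M0 * x ^ k else 0))
     sums (8 * Db - 8 * (x * Db) + 9 * (\<Sum>k. bb k * x ^ k) - 10 * SA + 10 * (x * SA) - 10 * M0 * x ^ 1)"
    using sums_diff[OF sums_add[OF sums_diff[OF sums_add[OF sums_diff[OF sums_mult[OF sD, of 8] sums_mult[OF sxD, of 8]] sums_mult[OF sB, of 9]] sums_mult[OF sA, of 10]] sums_mult[OF sxA, of 10]] sM] .
  moreover have Z: "(\<lambda>k. 8 * ((real k * bb k) * x ^ k) - 8 * (sh (\<lambda>j. real j * bb j) k * x ^ k) + 9 * (bb k * x ^ k)
        - 10 * (aa k * x ^ k) + 10 * (sh aa k * x ^ k) - (if k = 1 then 10 * M0 * x ^ k else 0)) = (\<lambda>k. 0)"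
  proof
    fix k show "8 * ((real k * bb k) * x ^ k) - 8 * (sh (\<lambda>j. real j * bb j) k * x ^ k) + 9 * (bb k * x ^ k)
        - 10 * (aa k * x ^ k) + 10 * (sh aa k * x ^ k) - (if k = 1 then 10 * M0 * x ^ k else 0) = 0"
    proof (cases k)
      case 0 then show ?thesis by simp
    next
      case (Suc n)
      have "8 * ((real k * bb k) * x ^ k) - 8 * (sh (\<lambda>j. real j * bb j) k * x ^ k) + 9 * (bb k * x ^ k)
        - 10 * (aa k * x ^ k) + 10 * (sh aa k * x ^ k) - (if k = 1 then 10 * M0 * x ^ k else 0)
          = ((8 * real (Suc n) + 9) * bb (Suc n) - 8 * real n * bb n - 10 * aa (Suc n) + 10 * aa n - (if n = 0 then 10 * M0 else 0)) * x ^ k"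
      proof (cases "n = 0")
        case True
        then show ?thesis unfolding Suc by (simp add: algebra_simps)
      next
        case False
        then have "k \<noteq> 1" unfolding Suc by simp
        then show ?thesis using False unfolding Suc by (simp only: if_False sh_Suc of_nat_Suc) (simp add: algebra_simps)
      qed
      then show ?thesis using R2[of n] by simp
    qed
  qed
  ultimately have S0: "(\<lambda>k. 0) sums (8 * Db - 8 * (x * Db) + 9 * (\<Sum>k. bb k * x ^ k) - 10 * SA + 10 * (x * SA) - 10 * M0 * x ^ 1)" by (simp only:)
  then have "8 * Db - 8 * (x * Db) + 9 * (\<Sum>k. bb k * x ^ k) - 10 * SA + 10 * (x * SA) - 10 * M0 * x ^ 1 = 0"
    using sums_unique2[OF _ sums_zero] by blast
  then show ?thesis unfolding Db_def[symmetric] SA_def[symmetric] by (simp add: algebra_simps)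
qed


lemma onep: "1 + (g::real)\<^sup>2 > 0" using zero_le_power2[of g] by linarith
lemma onep': "1 + (g::real)\<^sup>2 \<noteq> 0" using onep[of g] by linarith

definition XX :: "real \<Rightarrow> real" where "XX g = g\<^sup>2 / (1 + g\<^sup>2)"

lemma XX_ge: "XX g \<ge> 0" unfolding XX_def by simp
lemma XX_lt: "XX g < 1" unfolding XX_def by (simp add: add_pos_nonneg)
lemma XX_abs: "\<bar>XX g\<bar> < 1" using XX_ge[of g] XX_lt[of g] by simp

lemma XX_deriv: "DERIV XX g :> 2 * g / (1 + g\<^sup>2)\<^sup>2"
proof -
  have "1 + g\<^sup>2 \<noteq> 0" by (rule onep')
  then show ?thesis unfolding XX_def
    by (auto intro!: derivative_eq_intros simp: field_simps power2_eq_square)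
qed

definition GG :: "(nat \<Rightarrow> real) \<Rightarrow> real \<Rightarrow> real" where
  "GG c g = (\<Sum>k. c k * (g\<^sup>2 / (1 + g\<^sup>2)) ^ k)"

lemma GG_XX: "GG c g = (\<Sum>k. c k * XX g ^ k)" unfolding GG_def XX_def ..

lemma GG_deriv:
  assumes "summable (\<lambda>k. \<bar>c k\<bar>)"
  shows "DERIV (GG c) g :> (\<Sum>k. diffs c k * XX g ^ k) * (2 * g / (1 + g\<^sup>2)\<^sup>2)"
proof -
  have "DERIV (\<lambda>g. (\<lambda>y. \<Sum>k. c k * y ^ k) (XX g)) g :> (\<Sum>k. diffs c k * XX g ^ k) * (2 * g / (1 + g\<^sup>2)\<^sup>2)"
    by (rule DERIV_chain2[OF ps_deriv[OF assms XX_abs] XX_deriv])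
  moreover have "GG c = (\<lambda>g. (\<lambda>y. \<Sum>k. c k * y ^ k) (XX g))" by (simp add: GG_XX fun_eq_iff)
  ultimately show ?thesis by simp
qed

lemma four_g_deriv:
  "4 * g * ((P::real) * (2 * g / (1 + g\<^sup>2)\<^sup>2)) = 8 * (1 - XX g) * (XX g * P)"
proof -
  have "1 + g\<^sup>2 \<noteq> 0" by (rule onep')
  then show ?thesis unfolding XX_def by (simp add: field_simps power2_eq_square)
qed

lemma ode1: "4 * g * deriv (GG aa) g + 6 * GG aa g - 13 * GG bb g = 0"
  unfolding DERIV_imp_deriv[OF GG_deriv[OF summable_aa]] four_g_deriv GG_XX
  by (rule E1_series[OF XX_abs])

lemma ode2: "4 * g * deriv (GG bb) g + 9 * GG bb g - 10 / (1 + g\<^sup>2) * (GG aa g + g\<^sup>2 * M0) = 0"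
proof -
  have "1 + g\<^sup>2 \<noteq> 0" by (rule onep')
  then have o: "1 - XX g = 1 / (1 + g\<^sup>2)" unfolding XX_def by (simp add: field_simps)
  have e: "10 / (1 + g\<^sup>2) * (A + g\<^sup>2 * M0) = 10 * (1 - XX g) * A + 10 * M0 * XX g" for A
    unfolding o unfolding XX_def by (simp add: algebra_simps add_divide_distrib)
  show ?thesis
    unfolding DERIV_imp_deriv[OF GG_deriv[OF summable_bb]] four_g_deriv e GG_XX
    using E2_series[OF XX_abs, of g] by simp
qed

lemma GG_bound:
  assumes "summable (\<lambda>k. \<bar>c k\<bar>)" "c 0 = 0"
  shows "\<bar>GG c g\<bar> \<le> (\<Sum>k. \<bar>c k\<bar>) * XX g"
proof -
  let ?x = "XX g"
  have x: "0 \<le> ?x" "?x \<le> 1" using XX_ge XX_lt less_imp_le by auto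
  have le: "\<bar>c k * ?x ^ k\<bar> \<le> \<bar>c k\<bar> * ?x" for k
  proof (cases k)
    case 0 then show ?thesis using assms(2) x by simp
  next
    case (Suc n)
    have "?x ^ k \<le> ?x" unfolding Suc using x by (simp add: mult_left_le power_le_one)
    then show ?thesis using x by (simp add: abs_mult mult_left_mono)
  qed
  have s2: "summable (\<lambda>k. \<bar>c k\<bar> * ?x)" using assms(1) by (rule summable_mult2)
  have s1: "summable (\<lambda>k. \<bar>c k * ?x ^ k\<bar>)" by (rule summable_comparison_test'[OF s2]) (use le in auto)
  have "\<bar>GG c g\<bar> \<le> (\<Sum>k. \<bar>c k * ?x ^ k\<bar>)" unfolding GG_XX by (rule summable_rabs[OF s1])
  also have "\<dots> \<le> (\<Sum>k. \<bar>c k\<bar> * ?x)" by (rule suminf_le[OF le s1 s2])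
  also have "\<dots> = (\<Sum>k. \<bar>c k\<bar>) * ?x" by (rule suminf_mult2[OF assms(1), symmetric])
  finally show ?thesis .
qed


definition FF :: "real \<Rightarrow> real" where
  "FF g = - (2 / 5) * ((GG aa g + GG bb g) / g) + M0 * arctan g"

lemma FF_deriv:
  assumes g: "g > 0"
  shows "DERIV FF g :> GG aa g / (1 + g\<^sup>2)"
proof -
  define d1 where "d1 = deriv (GG aa) g"
  define d2 where "d2 = deriv (GG bb) g"
  have D1: "DERIV (GG aa) g :> d1" unfolding d1_def
    using GG_deriv[OF summable_aa] DERIV_imp_deriv by metis
  have D2: "DERIV (GG bb) g :> d2" unfolding d2_def
    using GG_deriv[OF summable_bb] DERIV_imp_deriv by metis
  have e1: "4 * g * d1 + 6 * GG aa g - 13 * GG bb g = 0" unfolding d1_def by (rule ode1)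
  have e2: "4 * g * d2 + 9 * GG bb g - 10 / (1 + g\<^sup>2) * (GG aa g + g\<^sup>2 * M0) = 0" unfolding d2_def by (rule ode2)
  have Q: "DERIV (\<lambda>g. (GG aa g + GG bb g) / g) g :> ((d1 + d2) * g - (GG aa g + GG bb g) * 1) / g\<^sup>2"
    using DERIV_quotient[OF DERIV_add[OF D1 D2] DERIV_ident] g by (simp add: power2_eq_square)
  have "DERIV FF g :> - (2 / 5) * (((d1 + d2) * g - (GG aa g + GG bb g) * 1) / g\<^sup>2) + M0 * inverse (1 + g\<^sup>2)"
    unfolding FF_def[abs_def] by (rule DERIV_add[OF DERIV_cmult[OF Q] DERIV_cmult[OF DERIV_arctan]])
  moreover have "- (2 / 5) * (((d1 + d2) * g - (GG aa g + GG bb g) * 1) / g\<^sup>2) + M0 * inverse (1 + g\<^sup>2) = GG aa g / (1 + g\<^sup>2)"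
  proof -
    have s: "(d1 + d2) * g = (4 * GG bb g - 6 * GG aa g + 10 / (1 + g\<^sup>2) * (GG aa g + g\<^sup>2 * M0)) / 4"
      using e1 e2 by (simp add: algebra_simps)
    have o: "1 + g\<^sup>2 \<noteq> 0" by (rule onep')
    have g2: "g\<^sup>2 \<noteq> 0" using g by simp
    have s2: "(d1 + d2) * g - (GG aa g + GG bb g) * 1 = 5 / 2 * (g\<^sup>2 / (1 + g\<^sup>2)) * (M0 - GG aa g)"
      unfolding s using o by (simp add: field_simps)
    have gen: "\<And>u v G M :: real. u \<noteq> 0 \<Longrightarrow> v \<noteq> 0 \<Longrightarrow> - (2 / 5) * (5 / 2 * (v / u) * (M - G) / v) + M * inverse u = G / u"
      by (simp add: field_simps)
    show ?thesis unfolding s2 by (rule gen[OF o g2])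
  qed
  ultimately show ?thesis by simp
qed

definition SS :: real where "SS = (\<Sum>k. \<bar>aa k\<bar>) + (\<Sum>k. \<bar>bb k\<bar>)"

lemma Q_bound:
  assumes "g > 0"
  shows "\<bar>(GG aa g + GG bb g) / g\<bar> \<le> SS * (g / (1 + g\<^sup>2))"
proof -
  have "\<bar>GG aa g + GG bb g\<bar> \<le> SS * XX g"
    using GG_bound[OF summable_aa, of g] GG_bound[OF summable_bb, of g] unfolding SS_def
    by (simp add: algebra_simps)
  then have "\<bar>(GG aa g + GG bb g) / g\<bar> \<le> SS * XX g / g" using assms by (simp add: abs_div divide_right_mono)
  also have "SS * XX g / g = SS * (g / (1 + g\<^sup>2))" unfolding XX_def using assms by (simp add: power2_eq_square)
  finally show ?thesis .
qed

lemma FF_at0: "(FF \<longlongrightarrow> 0) (at_right 0)"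
proof -
  have "((\<lambda>g. (GG aa g + GG bb g) / g) \<longlongrightarrow> 0) (at_right 0)"
  proof (rule Lim_null_comparison)
    show "\<forall>\<^sub>F g in at_right 0. norm ((GG aa g + GG bb g) / g) \<le> SS * (g / (1 + g\<^sup>2))"
      using Q_bound by (auto simp: eventually_at_right_less eventually_at_filter intro!: eventually_mono[OF eventually_at_right_less])
    show "((\<lambda>g::real. SS * (g / (1 + g\<^sup>2))) \<longlongrightarrow> 0) (at_right 0)" by real_asymp
  qed
  then have "((\<lambda>g. - (2 / 5) * ((GG aa g + GG bb g) / g) + M0 * arctan g) \<longlongrightarrow> - (2 / 5) * 0 + M0 * arctan 0) (at_right 0)"
    by (intro tendsto_intros) auto
  then show ?thesis unfolding FF_def[abs_def] by simp
qed

lemma FF_atinf: "(FF \<longlongrightarrow> M0 * (pi / 2)) at_top"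
proof -
  have "((\<lambda>g. (GG aa g + GG bb g) / g) \<longlongrightarrow> 0) at_top"
  proof (rule Lim_null_comparison)
    show "\<forall>\<^sub>F g in at_top. norm ((GG aa g + GG bb g) / g) \<le> SS * (g / (1 + g\<^sup>2))"
    proof (rule eventually_mono[OF eventually_gt_at_top[of 0]])
      fix g :: real assume "0 < g"
      then show "norm ((GG aa g + GG bb g) / g) \<le> SS * (g / (1 + g\<^sup>2))"
        using Q_bound[of g] by (simp only: real_norm_def)
    qed
    show "((\<lambda>g::real. SS * (g / (1 + g\<^sup>2))) \<longlongrightarrow> 0) at_top" by real_asymp
  qed
  then have "((\<lambda>g. - (2 / 5) * ((GG aa g + GG bb g) / g) + M0 * arctan g) \<longlongrightarrow> - (2 / 5) * 0 + M0 * (pi / 2)) at_top"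
    by (intro tendsto_intros tendsto_arctan_at_top)
  then show ?thesis unfolding FF_def[abs_def] by simp
qed


lemma GG_isCont: "summable (\<lambda>k. \<bar>c k\<bar>) \<Longrightarrow> isCont (GG c) g"
  using GG_deriv DERIV_isCont by blast

definition ff :: "real \<Rightarrow> real" where "ff g = GG aa g / (1 + g\<^sup>2)"

lemma ff_isCont: "isCont ff g"
  unfolding ff_def[abs_def] using GG_isCont[OF summable_aa] onep'
  by (intro continuous_intros) auto

lemma int1: "set_integrable lborel (einterval 0 \<infinity>) (\<lambda>x::real. 1 / (1 + x\<^sup>2))"
  using integrable_I0i_1_div_plus_square unfolding interval_lebesgue_integrable_def by simp

lemma int_ff: "set_integrable lborel (einterval 0 \<infinity>) ff"
proof (rule set_integrable_bound)
  define Sa where "Sa = (\<Sum>k. \<bar>aa k\<bar>)"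
  have Sa: "Sa \<ge> 0" unfolding Sa_def using summable_aa by (simp add: suminf_nonneg)
  show "set_integrable lborel (einterval 0 \<infinity>) (\<lambda>x::real. Sa * (1 / (1 + x\<^sup>2)))"
    using int1 by (rule set_integrable_mult_right)
  show "set_borel_measurable lborel (einterval 0 \<infinity>) ff"
  proof -
    have "continuous_on (einterval 0 \<infinity>) ff" by (intro continuous_at_imp_continuous_on ballI ff_isCont)
    from borel_measurable_continuous_on_indicator[OF borel_einterval this]
    show ?thesis unfolding set_borel_measurable_def by simp
  qed
  show "AE x in lborel. x \<in> einterval 0 \<infinity> \<longrightarrow> norm (ff x) \<le> norm (Sa * (1 / (1 + x\<^sup>2)))"
  proof (rule AE_I2, intro impI)
    fix x :: real
    have "\<bar>GG aa x\<bar> \<le> Sa * XX x" unfolding Sa_def by (rule GG_bound[OF summable_aa]) simp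
    also have "\<dots> \<le> Sa" using Sa XX_lt[of x] XX_ge[of x] by (simp add: mult_left_le)
    finally have "\<bar>GG aa x\<bar> \<le> Sa" .
    then show "norm (ff x) \<le> norm (Sa * (1 / (1 + x\<^sup>2)))"
      unfolding ff_def using onep[of x] Sa by (simp add: abs_div divide_right_mono)
  qed
qed

lemma LBINT_ff: "(LBINT x=0..\<infinity>. ff x) = M0 * (pi / 2) - 0"
proof (rule interval_integral_FTC_integrable[where F = FF])
  show "(0::ereal) < \<infinity>" by simp
  show "(FF has_vector_derivative ff x) (at x)" if "0 < ereal x" "ereal x < \<infinity>" for x
    using FF_deriv[of x] that unfolding ff_def has_real_derivative_iff_has_vector_derivative[symmetric]
    by (simp add: zero_ereal_def)
  show "isCont ff x" for x by (rule ff_isCont)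
  show "set_integrable lborel (einterval 0 \<infinity>) ff" by (rule int_ff)
  show "((FF \<circ> real_of_ereal) \<longlongrightarrow> 0) (at_right 0)"
    unfolding zero_ereal_def ereal_tendsto_simps1 by (rule FF_at0)
  show "((FF \<circ> real_of_ereal) \<longlongrightarrow> M0 * (pi / 2)) (at_left \<infinity>)"
    unfolding ereal_tendsto_simps1 by (rule FF_atinf)
qed

lemma ff_integral: "ff integrable_on {0..}" "integral {0..} ff = M0 * (pi / 2)"
proof -
  have S: "set_integrable lborel {0<..} ff" using int_ff by (simp add: zero_ereal_def)
  have L: "(LBINT x=0..\<infinity>. ff x) = (LINT x:{0<..}|lborel. ff x)"
    unfolding interval_lebesgue_integral_def by (simp add: zero_ereal_def)
  have n1: "negligible {x \<in> {0<..} - {0..}. ff x \<noteq> 0}" by (rule negligible_subset[OF negligible_empty]) auto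
  have n2: "negligible {x \<in> {0..} - {0<..}. ff x \<noteq> (0::real)}"
    by (rule negligible_subset[OF negligible_sing[of "0::real"]]) auto
  show "ff integrable_on {0..}"
    by (rule integrable_spike_set[OF set_borel_integral_eq_integral(1)[OF S] n1 n2])
  have "integral {0..} ff = integral {0<..} ff" using integral_spike_set[OF n2 n1] .
  also have "\<dots> = M0 * (pi / 2)" using set_borel_integral_eq_integral(2)[OF S] L LBINT_ff by simp
  finally show "integral {0..} ff = M0 * (pi / 2)" .
qed

theorem lemma3p1:
  shows "\<exists>a b :: nat \<Rightarrow> real.
    summable (\<lambda>k. \<bar>a k\<bar>) \<and> summable (\<lambda>k. \<bar>b k\<bar>) \<and>
    (let G1 = (\<lambda>\<gamma>::real. \<Sum>k. a k * (\<gamma>\<^sup>2 / (1 + \<gamma>\<^sup>2)) ^ k);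
         G2 = (\<lambda>\<gamma>::real. \<Sum>k. b k * (\<gamma>\<^sup>2 / (1 + \<gamma>\<^sup>2)) ^ k);
         M = 2 / pi * integral {0..} (\<lambda>\<gamma>. G1 \<gamma> / (1 + \<gamma>\<^sup>2))
     in (\<lambda>\<gamma>. G1 \<gamma> / (1 + \<gamma>\<^sup>2)) integrable_on {0..} \<and>
        (\<forall>\<gamma>\<ge>0. G1 differentiable (at \<gamma>) \<and> G2 differentiable (at \<gamma>) \<and>
           4 * \<gamma> * deriv G1 \<gamma> + 6 * G1 \<gamma> - 13 * G2 \<gamma> = 0 \<and>
           4 * \<gamma> * deriv G2 \<gamma> + 9 * G2 \<gamma>
             - 10 / (1 + \<gamma>\<^sup>2) * (G1 \<gamma> + \<gamma>\<^sup>2 * M) = 0) \<and>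
        M = - 351 / 19)"
proof (intro exI conjI)
  show "summable (\<lambda>k. \<bar>aa k\<bar>)" by (rule summable_aa)
  show "summable (\<lambda>k. \<bar>bb k\<bar>)" by (rule summable_bb)
  have e1: "(\<lambda>\<gamma>::real. \<Sum>k. aa k * (\<gamma>\<^sup>2 / (1 + \<gamma>\<^sup>2)) ^ k) = GG aa" by (rule ext) (simp add: GG_def)
  have e2: "(\<lambda>\<gamma>::real. \<Sum>k. bb k * (\<gamma>\<^sup>2 / (1 + \<gamma>\<^sup>2)) ^ k) = GG bb" by (rule ext) (simp add: GG_def)
  have ff': "(\<lambda>\<gamma>. GG aa \<gamma> / (1 + \<gamma>\<^sup>2)) = ff" by (rule ext) (simp add: ff_def)
  have M: "2 / pi * integral {0..} ff = M0" unfolding ff_integral(2) by simp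
  have d: "GG c differentiable (at g)" if "summable (\<lambda>k. \<bar>c k\<bar>)" for c and g :: real
    using GG_deriv[OF that] real_differentiable_def by blast
  show "let G1 = (\<lambda>\<gamma>::real. \<Sum>k. aa k * (\<gamma>\<^sup>2 / (1 + \<gamma>\<^sup>2)) ^ k);
         G2 = (\<lambda>\<gamma>::real. \<Sum>k. bb k * (\<gamma>\<^sup>2 / (1 + \<gamma>\<^sup>2)) ^ k);
         M = 2 / pi * integral {0..} (\<lambda>\<gamma>. G1 \<gamma> / (1 + \<gamma>\<^sup>2))
     in (\<lambda>\<gamma>. G1 \<gamma> / (1 + \<gamma>\<^sup>2)) integrable_on {0..} \<and>
        (\<forall>\<gamma>\<ge>0. G1 differentiable (at \<gamma>) \<and> G2 differentiable (at \<gamma>) \<and>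
           4 * \<gamma> * deriv G1 \<gamma> + 6 * G1 \<gamma> - 13 * G2 \<gamma> = 0 \<and>
           4 * \<gamma> * deriv G2 \<gamma> + 9 * G2 \<gamma>
             - 10 / (1 + \<gamma>\<^sup>2) * (G1 \<gamma> + \<gamma>\<^sup>2 * M) = 0) \<and>
        M = - 351 / 19"
    unfolding e1 e2 Let_def ff' M
    using ff_integral(1) ode1 ode2 d[OF summable_aa] d[OF summable_bb] by (simp add: M0_def)
qed

end
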